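(* Let $A$ be a minimal $A_\infty$-algebra over a field supported in non-positive degrees, and let $P$ be a minimal $A_\infty$-module over $A$. Then the ascending degree filtration $P^{(l)}=\bigoplus_{k\le l}P^k$ is a filtration by $A_\infty$-submodules, and the subquotients, which are supported in a single degree, are determined up to $A_\infty$-equivalence by the corresponding representation of $A^0$.
   Context: An $A_\infty$-algebra is minimal if $\mu^1=0$; a module with structure maps $\mu^{1|d}:P\otimes A^{\otimes d}\to P$ of degree $1-d$ is minimal if $\mu^{1|0}=0$. $A^0$ is an ordinary associative algebra under $\mu^2$, and a subquotient concentrated in one degree is an ordinary $A^0$-module via $\mu^{1|1}$. *)

theory Defs
  imports Main "HOL.Vector_Spaces"
begin

text \<open>A graded vector space over a field is a family of subspaces
  G k (k :: int) of an ambient vector space (type 'v, scalar multiplication s)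
  which is independent; the graded space itself is the direct sum, i.e. the span
  of all G k. Multilinear maps on tensor powers are modelled as functions on lists
  that are linear in every slot. Signs follow the shifted (bar construction)
  convention: the Koszul sign of passing an operation of shifted degree 1 past an
  element x of degree k is (-1)^(k-1).\<close>

definition ksign :: "int \<Rightarrow> 'k::field" where
  "ksign n = (if even n then 1 else -1)"

definition graded_vs :: "('k::field \<Rightarrow> 'v::ab_group_add \<Rightarrow> 'v) \<Rightarrow> (int \<Rightarrow> 'v set) \<Rightarrow> bool" where
  "graded_vs s G \<longleftrightarrow> vector_space s \<and> (\<forall>k. module.subspace s (G k)) \<and>
     (\<forall>c. finite {k. c k \<noteq> 0} \<longrightarrow> (\<forall>k. c k \<in> G k) \<longrightarrow>
          (\<Sum>k\<in>{k. c k \<noteq> 0}. c k) = 0 \<longrightarrow> (\<forall>k. c k = 0))"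

definition gcarrier :: "('k::field \<Rightarrow> 'v::ab_group_add \<Rightarrow> 'v) \<Rightarrow> (int \<Rightarrow> 'v set) \<Rightarrow> 'v set" where
  "gcarrier s G = module.span s (\<Union>k. G k)"

definition degfilt :: "('k::field \<Rightarrow> 'v::ab_group_add \<Rightarrow> 'v) \<Rightarrow> (int \<Rightarrow> 'v set) \<Rightarrow> int \<Rightarrow> 'v set" where
  "degfilt s G l = module.span s (\<Union>k\<in>{..l}. G k)"

definition concentrated :: "(int \<Rightarrow> 'v::zero set) \<Rightarrow> int \<Rightarrow> bool" where
  "concentrated G l \<longleftrightarrow> (\<forall>k. k \<noteq> l \<longrightarrow> G k = {0})"

definition hom_list :: "(int \<Rightarrow> 'a set) \<Rightarrow> int list \<Rightarrow> 'a list \<Rightarrow> bool" where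
  "hom_list G ks xs \<longleftrightarrow> length ks = length xs \<and> (\<forall>i<length xs. xs ! i \<in> G (ks ! i))"

definition lin_on :: "('k \<Rightarrow> 'a::ab_group_add \<Rightarrow> 'a) \<Rightarrow> 'a set \<Rightarrow> ('k \<Rightarrow> 'b::ab_group_add \<Rightarrow> 'b) \<Rightarrow> ('a \<Rightarrow> 'b) \<Rightarrow> bool" where
  "lin_on sA C sB f \<longleftrightarrow> (\<forall>x\<in>C. \<forall>y\<in>C. \<forall>c. f (x + y) = f x + f y \<and> f (sA c x) = sB c (f x))"

definition multilin :: "('k \<Rightarrow> 'a::ab_group_add \<Rightarrow> 'a) \<Rightarrow> 'a set \<Rightarrow> ('k \<Rightarrow> 'b::ab_group_add \<Rightarrow> 'b) \<Rightarrow> ('a list \<Rightarrow> 'b) \<Rightarrow> bool" where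
  "multilin sA C sB f \<longleftrightarrow> (\<forall>ys ws. set ys \<subseteq> C \<longrightarrow> set ws \<subseteq> C \<longrightarrow> lin_on sA C sB (\<lambda>x. f (ys @ x # ws)))"

text \<open>Index set for the splittings xs = ys @ zs @ ws with zs nonempty (i = |ys|, j = |zs|).\<close>
definition splits :: "nat \<Rightarrow> (nat \<times> nat) set" where
  "splits n = {(i, j). 1 \<le> j \<and> i + j \<le> n}"

definition shsum :: "int list \<Rightarrow> int" where
  "shsum ks = sum_list (map (\<lambda>k. k - 1) ks)"

definition ainf_alg :: "('k::field \<Rightarrow> 'a::ab_group_add \<Rightarrow> 'a) \<Rightarrow> (int \<Rightarrow> 'a set) \<Rightarrow> ('a list \<Rightarrow> 'a) \<Rightarrow> bool" where
  "ainf_alg s G mu \<longleftrightarrow> graded_vs s G \<and> multilin s (gcarrier s G) s mu \<and>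
    (\<forall>ks xs. hom_list G ks xs \<longrightarrow> xs \<noteq> [] \<longrightarrow> mu xs \<in> G (sum_list ks + 2 - int (length xs))) \<and>
    (\<forall>ks xs. hom_list G ks xs \<longrightarrow>
       (\<Sum>(i, j)\<in>splits (length xs).
          s (ksign (shsum (take i ks))) (mu (take i xs @ mu (take j (drop i xs)) # drop (i + j) xs))) = 0)"

definition minimal_alg :: "('k::field \<Rightarrow> 'a::ab_group_add \<Rightarrow> 'a) \<Rightarrow> (int \<Rightarrow> 'a set) \<Rightarrow> ('a list \<Rightarrow> 'a) \<Rightarrow> bool" where
  "minimal_alg s G mu \<longleftrightarrow> (\<forall>a\<in>gcarrier s G. mu [a] = 0)"

text \<open>Right A-infinity module over (sA, GA, mu): operations m p [a1,...,ad] = mu^{1|d}(p, a1, ..., ad)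
  of degree 1 - d.\<close>
definition ainf_mod :: "('k::field \<Rightarrow> 'a::ab_group_add \<Rightarrow> 'a) \<Rightarrow> (int \<Rightarrow> 'a set) \<Rightarrow> ('a list \<Rightarrow> 'a) \<Rightarrow>
    ('k \<Rightarrow> 'p::ab_group_add \<Rightarrow> 'p) \<Rightarrow> (int \<Rightarrow> 'p set) \<Rightarrow> ('p \<Rightarrow> 'a list \<Rightarrow> 'p) \<Rightarrow> bool" where
  "ainf_mod sA GA mu sP GP m \<longleftrightarrow> ainf_alg sA GA mu \<and> graded_vs sP GP \<and>
    (\<forall>as. set as \<subseteq> gcarrier sA GA \<longrightarrow> lin_on sP (gcarrier sP GP) sP (\<lambda>p. m p as)) \<and>
    (\<forall>p\<in>gcarrier sP GP. multilin sA (gcarrier sA GA) sP (m p)) \<and>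
    (\<forall>k p ks as. p \<in> GP k \<longrightarrow> hom_list GA ks as \<longrightarrow>
        m p as \<in> GP (k + sum_list ks + 1 - int (length as))) \<and>
    (\<forall>k p ks as. p \<in> GP k \<longrightarrow> hom_list GA ks as \<longrightarrow>
        (\<Sum>i\<le>length as. m (m p (take i as)) (drop i as)) +
        (\<Sum>(i, j)\<in>splits (length as).
           sP (ksign ((k - 1) + shsum (take i ks))) (m p (take i as @ mu (take j (drop i as)) # drop (i + j) as))) = 0)"

definition minimal_mod :: "('k::field \<Rightarrow> 'p::ab_group_add \<Rightarrow> 'p) \<Rightarrow> (int \<Rightarrow> 'p set) \<Rightarrow> ('p \<Rightarrow> 'a list \<Rightarrow> 'p) \<Rightarrow> bool" where
  "minimal_mod sP GP m \<longleftrightarrow> (\<forall>p\<in>gcarrier sP GP. m p [] = 0)"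

definition ainf_submod :: "('k::field \<Rightarrow> 'a::ab_group_add \<Rightarrow> 'a) \<Rightarrow> (int \<Rightarrow> 'a set) \<Rightarrow>
    ('k \<Rightarrow> 'p::ab_group_add \<Rightarrow> 'p) \<Rightarrow> (int \<Rightarrow> 'p set) \<Rightarrow> ('p \<Rightarrow> 'a list \<Rightarrow> 'p) \<Rightarrow> 'p set \<Rightarrow> bool" where
  "ainf_submod sA GA sP GP m Q \<longleftrightarrow> Q \<subseteq> gcarrier sP GP \<and> module.subspace sP Q \<and>
     Q = module.span sP (\<Union>k. Q \<inter> GP k) \<and>
     (\<forall>p\<in>Q. \<forall>as. set as \<subseteq> gcarrier sA GA \<longrightarrow> m p as \<in> Q)"

text \<open>A-infinity module morphism f = (f^{1|d}), f p as of degree -length as.\<close>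
definition ainf_morph :: "('k::field \<Rightarrow> 'a::ab_group_add \<Rightarrow> 'a) \<Rightarrow> (int \<Rightarrow> 'a set) \<Rightarrow> ('a list \<Rightarrow> 'a) \<Rightarrow>
    ('k \<Rightarrow> 'p::ab_group_add \<Rightarrow> 'p) \<Rightarrow> (int \<Rightarrow> 'p set) \<Rightarrow> ('p \<Rightarrow> 'a list \<Rightarrow> 'p) \<Rightarrow>
    ('k \<Rightarrow> 'q::ab_group_add \<Rightarrow> 'q) \<Rightarrow> (int \<Rightarrow> 'q set) \<Rightarrow> ('q \<Rightarrow> 'a list \<Rightarrow> 'q) \<Rightarrow>
    ('p \<Rightarrow> 'a list \<Rightarrow> 'q) \<Rightarrow> bool" where
  "ainf_morph sA GA mu sP GP mP sQ GQ mQ f \<longleftrightarrow>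
    (\<forall>as. set as \<subseteq> gcarrier sA GA \<longrightarrow> lin_on sP (gcarrier sP GP) sQ (\<lambda>p. f p as)) \<and>
    (\<forall>p\<in>gcarrier sP GP. multilin sA (gcarrier sA GA) sQ (f p)) \<and>
    (\<forall>k p ks as. p \<in> GP k \<longrightarrow> hom_list GA ks as \<longrightarrow>
        f p as \<in> GQ (k + sum_list ks - int (length as))) \<and>
    (\<forall>k p ks as. p \<in> GP k \<longrightarrow> hom_list GA ks as \<longrightarrow>
        (\<Sum>i\<le>length as. mQ (f p (take i as)) (drop i as)) =
        (\<Sum>i\<le>length as. f (mP p (take i as)) (drop i as)) +
        (\<Sum>(i, j)\<in>splits (length as).
           sQ (ksign ((k - 1) + shsum (take i ks))) (f p (take i as @ mu (take j (drop i as)) # drop (i + j) as))))"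

text \<open>f^{1|0} induces an isomorphism on cohomology with respect to mu^{1|0}.\<close>
definition quasi_iso :: "(int \<Rightarrow> 'p::ab_group_add set) \<Rightarrow> ('p \<Rightarrow> 'a list \<Rightarrow> 'p) \<Rightarrow>
    (int \<Rightarrow> 'q::ab_group_add set) \<Rightarrow> ('q \<Rightarrow> 'a list \<Rightarrow> 'q) \<Rightarrow> ('p \<Rightarrow> 'a list \<Rightarrow> 'q) \<Rightarrow> bool" where
  "quasi_iso GP mP GQ mQ f \<longleftrightarrow>
    (\<forall>k. \<forall>p\<in>GP k. mP p [] = 0 \<longrightarrow> (\<exists>q\<in>GQ (k - 1). f p [] = mQ q []) \<longrightarrow>
           (\<exists>p'\<in>GP (k - 1). p = mP p' [])) \<and>
    (\<forall>k. \<forall>q\<in>GQ k. mQ q [] = 0 \<longrightarrow>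
           (\<exists>p\<in>GP k. mP p [] = 0 \<and> (\<exists>q'\<in>GQ (k - 1). q = f p [] + mQ q' [])))"

definition ainf_equivalent where
  "ainf_equivalent sA GA mu sP GP mP sQ GQ mQ \<longleftrightarrow>
     (\<exists>f. ainf_morph sA GA mu sP GP mP sQ GQ mQ f \<and> quasi_iso GP mP GQ mQ f)"

text \<open>(sQ, GQ, mQ) together with pi is (a realisation of) the subquotient
  module P^(l) / P^(l-1): pi is a degree preserving linear surjection
  P^(l) \<rightarrow> Q with kernel P^(l-1) intertwining the structure maps.\<close>
definition is_subquotient where
  "is_subquotient sA GA sP GP mP l sQ GQ mQ pi \<longleftrightarrow>
     lin_on sP (degfilt sP GP l) sQ pi \<and>
     pi ` degfilt sP GP l = gcarrier sQ GQ \<and>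
     (\<forall>x\<in>degfilt sP GP l. pi x = 0 \<longleftrightarrow> x \<in> degfilt sP GP (l - 1)) \<and>
     (\<forall>k. pi ` (GP k \<inter> degfilt sP GP l) = GQ k) \<and>
     (\<forall>p\<in>degfilt sP GP l. \<forall>as. set as \<subseteq> gcarrier sA GA \<longrightarrow> pi (mP p as) = mQ (pi p) as)"

end

theory Submission
  imports Defs
begin

lemma gv_facts:
  assumes "graded_vs s G"
  shows gv_module: "module s" and gv_sub: "module.subspace s (G k)"
    and gv_in: "G k \<subseteq> gcarrier s G" and gv_csub: "module.subspace s (gcarrier s G)"
    and gv_0: "0 \<in> G k"
proof -
  show ms: "module s" using assms by (simp add: graded_vs_def module_iff_vector_space)
  show s: "module.subspace s (G k)" using assms by (simp add: graded_vs_def)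
  show "G k \<subseteq> gcarrier s G" unfolding gcarrier_def
    by (rule order_trans[OF _ module.span_superset[OF ms]]) auto
  show "module.subspace s (gcarrier s G)" unfolding gcarrier_def using module.subspace_span[OF ms] .
  show "0 \<in> G k" using module.subspace_0[OF ms s] .
qed

lemma lin_zero: "lin_on sA C sB f \<Longrightarrow> 0 \<in> C \<Longrightarrow> f 0 = 0"
  unfolding lin_on_def by (metis add_0 add_left_imp_eq add.right_neutral)

lemma hom_list_set: "hom_list G ks xs \<Longrightarrow> (\<And>k. G k \<subseteq> C) \<Longrightarrow> set xs \<subseteq> C"
  unfolding hom_list_def by (auto simp: in_set_conv_nth) blast

lemma hom_list_snoc: "hom_list G ks xs \<Longrightarrow> w \<in> G j \<Longrightarrow> hom_list G (ks @ [j]) (xs @ [w])"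
  unfolding hom_list_def by (auto simp: nth_append)

lemma hom_list_min:
  assumes "hom_list G ks xs" "\<forall>k>0. G k = {0}" "0 \<in> G 0"
  shows "hom_list G (map (min 0) ks) xs"
  unfolding hom_list_def
proof (intro conjI allI impI)
  show "length (map (min 0) ks) = length xs" using assms(1) by (simp add: hom_list_def)
  fix i assume i: "i < length xs"
  then have x: "xs ! i \<in> G (ks ! i)" and l: "i < length ks" using assms(1) by (auto simp: hom_list_def)
  show "xs ! i \<in> G (map (min 0) ks ! i)"
  proof (cases "ks ! i > 0")
    case True
    then show ?thesis using x assms(2,3) l by auto
  next
    case False
    then show ?thesis using x l by (simp add: min_def)
  qed
qed

lemma sum_min_nonpos: "sum_list (map (min (0::int)) ks) \<le> 0"
  by (induct ks) auto

lemma lin_pre_subspace: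
  assumes ms: "module sA" and C: "module.subspace sA C" and f: "lin_on sA C sB f"
    and mB: "module sB" and D: "module.subspace sB D"
  shows "module.subspace sA {x\<in>C. f x \<in> D}"
proof (rule module.subspaceI[OF ms])
  have "f 0 = 0" using lin_zero[OF f module.subspace_0[OF ms C]] .
  then show "0 \<in> {x \<in> C. f x \<in> D}" using module.subspace_0[OF ms C] module.subspace_0[OF mB D] by simp
  fix x y assume x: "x \<in> {x \<in> C. f x \<in> D}" and y: "y \<in> {x \<in> C. f x \<in> D}"
  then show "x + y \<in> {x \<in> C. f x \<in> D}"
    using f module.subspace_add[OF ms C] module.subspace_add[OF mB D] unfolding lin_on_def by auto
next
  fix c x assume x: "x \<in> {x \<in> C. f x \<in> D}"
  then show "sA c x \<in> {x \<in> C. f x \<in> D}"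
    using f module.subspace_scale[OF ms C] module.subspace_scale[OF mB D] unfolding lin_on_def by auto
qed

lemma graded_rep:
  assumes G: "graded_vs s G" and y: "y \<in> module.span s (\<Union>k\<in>{..l}. G k)"
  shows "\<exists>c F. finite F \<and> (\<forall>j. c j \<in> G j) \<and> (\<forall>j. j \<notin> F \<longrightarrow> c j = 0) \<and> (\<forall>j>l. c j = 0) \<and> y = sum c F"
proof -
  have ms: "module s" by (rule gv_module[OF G])
  let ?P = "{y. \<exists>c F. finite F \<and> (\<forall>j. c j \<in> G j) \<and> (\<forall>j. j \<notin> F \<longrightarrow> c j = 0) \<and> (\<forall>j>l. c j = 0) \<and> y = sum c F}"
  have "y \<in> ?P"
  proof (rule module.span_subspace_induct[OF ms y])
    show "module.subspace s ?P"
    proof (rule module.subspaceI[OF ms])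
      show "0 \<in> ?P" by (rule CollectI, rule exI[of _ "\<lambda>_. 0"], rule exI[of _ "{}"]) (simp add: gv_0[OF G])
    next
      fix x y assume "x \<in> ?P" "y \<in> ?P"
      then obtain c F d H where c: "finite F" "\<forall>j. c j \<in> G j" "\<forall>j. j \<notin> F \<longrightarrow> c j = 0" "\<forall>j>l. c j = 0" "x = sum c F"
        and d: "finite H" "\<forall>j. d j \<in> G j" "\<forall>j. j \<notin> H \<longrightarrow> d j = 0" "\<forall>j>l. d j = 0" "y = sum d H" by blast
      have "sum c F = sum c (F \<union> H)" by (rule sum.mono_neutral_left) (use c d in auto)
      moreover have "sum d H = sum d (F \<union> H)" by (rule sum.mono_neutral_left) (use c d in auto)
      ultimately have "x + y = sum (\<lambda>j. c j + d j) (F \<union> H)" using c d by (simp add: sum.distrib)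
      moreover have "\<forall>j. c j + d j \<in> G j" using c d module.subspace_add[OF ms gv_sub[OF G]] by blast
      ultimately show "x + y \<in> ?P" using c d by (intro CollectI exI[of _ "\<lambda>j. c j + d j"] exI[of _ "F \<union> H"]) auto
    next
      fix a x assume "x \<in> ?P"
      then obtain c F where c: "finite F" "\<forall>j. c j \<in> G j" "\<forall>j. j \<notin> F \<longrightarrow> c j = 0" "\<forall>j>l. c j = 0" "x = sum c F" by blast
      have "s a x = sum (\<lambda>j. s a (c j)) F" using c module.scale_sum_right[OF ms] by simp
      moreover have "\<forall>j. s a (c j) \<in> G j" using c module.subspace_scale[OF ms gv_sub[OF G]] by blast
      ultimately show "s a x \<in> ?P" using c module.scale_zero_right[OF ms]
        by (intro CollectI exI[of _ "\<lambda>j. s a (c j)"] exI[of _ F]) auto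
    qed
  next
    fix x assume "x \<in> (\<Union>k\<in>{..l}. G k)"
    then obtain k where k: "k \<le> l" "x \<in> G k" by auto
    show "x \<in> ?P"
      using k gv_0[OF G] by (intro CollectI exI[of _ "(\<lambda>_. 0)(k := x)"] exI[of _ "{k}"]) auto
  qed
  then show ?thesis by blast
qed

lemma graded_high_zero:
  assumes G: "graded_vs s G" and x: "x \<in> G k" and xd: "x \<in> degfilt s G l" and kl: "k > l"
  shows "x = 0"
proof -
  have ms: "module s" by (rule gv_module[OF G])
  obtain c F where c: "finite F" "\<forall>j. c j \<in> G j" "\<forall>j. j \<notin> F \<longrightarrow> c j = 0" "\<forall>j>l. c j = 0" "x = sum c F"
    using graded_rep[OF G xd[unfolded degfilt_def]] by blast
  define c' where "c' = c(k := - x)"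
  have ck: "c k = 0" using c kl by auto
  have "sum c F = sum c (F - {k})" by (rule sum.mono_neutral_right) (use c ck in auto)
  have e1: "sum c' (insert k (F - {k})) = c' k + sum c' (F - {k})"
    by (rule sum.insert) (use c in auto)
  have e2: "sum c' (F - {k}) = sum c (F - {k})" by (rule sum.cong) (auto simp: c'_def)
  have s0: "sum c' (insert k (F - {k})) = 0"
    unfolding e1 e2 using c \<open>sum c F = sum c (F - {k})\<close> by (simp add: c'_def)
  have fin: "finite {j. c' j \<noteq> 0}"
    by (rule finite_subset[of _ "insert k F"]) (use c in \<open>auto simp: c'_def\<close>)
  have "sum c' {j. c' j \<noteq> 0} = sum c' (insert k (F - {k}))"
    by (rule sum.mono_neutral_left) (use c in \<open>auto simp: c'_def\<close>)
  then have s1: "sum c' {j. c' j \<noteq> 0} = 0" using s0 by simp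
  have inG: "\<forall>j. c' j \<in> G j" using c x module.subspace_neg[OF ms gv_sub[OF G]] by (auto simp: c'_def)
  have "\<forall>j. c' j = 0" using G fin inG s1 unfolding graded_vs_def by blast
  then show "x = 0" by (metis c'_def fun_upd_same neg_equal_0_iff_equal)
qed


lemma mod_facts:
  assumes "ainf_mod sA GA mu sP GP m"
  shows mf_GA: "graded_vs sA GA" and mf_GP: "graded_vs sP GP"
    and mf_lin: "\<And>as. set as \<subseteq> gcarrier sA GA \<Longrightarrow> lin_on sP (gcarrier sP GP) sP (\<lambda>p. m p as)"
    and mf_mlin: "\<And>p. p \<in> gcarrier sP GP \<Longrightarrow> multilin sA (gcarrier sA GA) sP (m p)"
    and mf_deg: "\<And>k p ks as. p \<in> GP k \<Longrightarrow> hom_list GA ks as \<Longrightarrow>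
        m p as \<in> GP (k + sum_list ks + 1 - int (length as))"
  using assms unfolding ainf_mod_def ainf_alg_def by blast+

lemma degfilt_facts:
  assumes G: "graded_vs s G"
  shows df_sub: "module.subspace s (degfilt s G l)" and df_in: "k \<le> l \<Longrightarrow> G k \<subseteq> degfilt s G l"
    and df_c: "degfilt s G l \<subseteq> gcarrier s G"
proof -
  have ms: "module s" by (rule gv_module[OF G])
  show "module.subspace s (degfilt s G l)" unfolding degfilt_def using module.subspace_span[OF ms] .
  show "k \<le> l \<Longrightarrow> G k \<subseteq> degfilt s G l" unfolding degfilt_def
    by (rule order_trans[OF _ module.span_superset[OF ms]]) auto
  show "degfilt s G l \<subseteq> gcarrier s G" unfolding degfilt_def gcarrier_def
    by (rule module.span_mono[OF ms]) auto
qed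

lemma mod_closure:
  assumes P: "ainf_mod sA GA mu sP GP m" and Pmin: "minimal_mod sP GP m"
    and Anonpos: "\<forall>k>0. GA k = {0}" and p: "p \<in> GP k" and kl: "k \<le> l"
  shows "hom_list GA ks ys \<Longrightarrow> set ws \<subseteq> gcarrier sA GA \<Longrightarrow> m p (ys @ ws) \<in> degfilt sP GP l"
proof (induct ws arbitrary: ys ks)
  case Nil
  have GA: "graded_vs sA GA" and GP: "graded_vs sP GP" using mf_GA[OF P] mf_GP[OF P] .
  show ?case
  proof (cases "ys = []")
    case True
    then have "m p (ys @ []) = 0" using Pmin p gv_in[OF GP] unfolding minimal_mod_def by auto
    then show ?thesis using module.subspace_0[OF gv_module[OF GP] df_sub[OF GP]] by simp
  next
    case False
    have h: "hom_list GA (map (min 0) ks) ys" by (rule hom_list_min[OF Nil(1) Anonpos gv_0[OF GA]])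
    have "m p ys \<in> GP (k + sum_list (map (min 0) ks) + 1 - int (length ys))" by (rule mf_deg[OF P p h])
    moreover have "k + sum_list (map (min 0) ks) + 1 - int (length ys) \<le> l"
      using sum_min_nonpos[of ks] False kl by (cases ys) auto
    ultimately show ?thesis using df_in[OF GP] by auto
  qed
next
  case (Cons w ws)
  have GA: "graded_vs sA GA" and GP: "graded_vs sP GP" using mf_GA[OF P] mf_GP[OF P] .
  have msA: "module sA" and msP: "module sP" using gv_module[OF GA] gv_module[OF GP] .
  have ysC: "set ys \<subseteq> gcarrier sA GA" using hom_list_set[OF Cons(2) gv_in[OF GA]] .
  have wsC: "set ws \<subseteq> gcarrier sA GA" and wC: "w \<in> gcarrier sA GA" using Cons(3) by auto
  have pC: "p \<in> gcarrier sP GP" using p gv_in[OF GP] by auto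
  have lin: "lin_on sA (gcarrier sA GA) sP (\<lambda>x. m p (ys @ x # ws))"
    using mf_mlin[OF P pC] ysC wsC unfolding multilin_def by blast
  have "w \<in> {x \<in> gcarrier sA GA. m p (ys @ x # ws) \<in> degfilt sP GP l}"
  proof (rule module.span_subspace_induct[OF msA wC[unfolded gcarrier_def]])
    show "module.subspace sA {x \<in> gcarrier sA GA. m p (ys @ x # ws) \<in> degfilt sP GP l}"
      by (rule lin_pre_subspace[OF msA gv_csub[OF GA] lin msP df_sub[OF GP]])
  next
    fix x assume "x \<in> (\<Union>k. GA k)"
    then obtain j where x: "x \<in> GA j" by auto
    have "m p ((ys @ [x]) @ ws) \<in> degfilt sP GP l"
      by (rule Cons(1)[OF hom_list_snoc[OF Cons(2) x] wsC])
    then show "x \<in> {x \<in> gcarrier sA GA. m p (ys @ x # ws) \<in> degfilt sP GP l}"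
      using x gv_in[OF GA] by auto
  qed
  then show ?case by simp
qed

lemma part1:
  assumes P: "ainf_mod sA GA mu sP GP m" and Pmin: "minimal_mod sP GP m"
    and Anonpos: "\<forall>k>0. GA k = {0}"
  shows "ainf_submod sA GA sP GP m (degfilt sP GP l)"
proof -
  have GA: "graded_vs sA GA" and GP: "graded_vs sP GP" using mf_GA[OF P] mf_GP[OF P] .
  have msA: "module sA" and msP: "module sP" using gv_module[OF GA] gv_module[OF GP] .
  let ?D = "degfilt sP GP l"
  let ?S = "{p \<in> gcarrier sP GP. \<forall>as. set as \<subseteq> gcarrier sA GA \<longrightarrow> m p as \<in> ?D}"
  have cl: "p \<in> ?S" if pD: "p \<in> ?D" for p
  proof (rule module.span_subspace_induct[OF msP pD[unfolded degfilt_def]])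
    show "module.subspace sP ?S"
    proof (rule module.subspaceI[OF msP])
      show "0 \<in> ?S" using lin_zero[OF mf_lin[OF P] module.subspace_0[OF msP gv_csub[OF GP]]]
          module.subspace_0[OF msP gv_csub[OF GP]] module.subspace_0[OF msP df_sub[OF GP]] by auto
    next
      fix x y assume "x \<in> ?S" "y \<in> ?S"
      then show "x + y \<in> ?S" using mf_lin[OF P] module.subspace_add[OF msP gv_csub[OF GP]]
          module.subspace_add[OF msP df_sub[OF GP]] unfolding lin_on_def by auto
    next
      fix c x assume "x \<in> ?S"
      then show "sP c x \<in> ?S" using mf_lin[OF P] module.subspace_scale[OF msP gv_csub[OF GP]]
          module.subspace_scale[OF msP df_sub[OF GP]] unfolding lin_on_def by auto
    qed
  next
    fix x assume "x \<in> (\<Union>k\<in>{..l}. GP k)"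
    then obtain k where k: "k \<le> l" "x \<in> GP k" by auto
    have "\<forall>as. set as \<subseteq> gcarrier sA GA \<longrightarrow> m x as \<in> ?D"
      using mod_closure[OF P Pmin Anonpos k(2) k(1), of "[]" "[]"] by (simp add: hom_list_def)
    then show "x \<in> ?S" using k gv_in[OF GP] by auto
  qed
  have eq: "?D = module.span sP (\<Union>k. ?D \<inter> GP k)"
  proof
    show "?D \<subseteq> module.span sP (\<Union>k. ?D \<inter> GP k)" unfolding degfilt_def
      by (rule module.span_mono[OF msP]) (use df_in[OF GP] in \<open>auto simp: degfilt_def\<close>)
    show "module.span sP (\<Union>k. ?D \<inter> GP k) \<subseteq> ?D"
      by (rule module.span_minimal[OF msP _ df_sub[OF GP]]) auto
  qed
  show ?thesis unfolding ainf_submod_def using df_c[OF GP] df_sub[OF GP] eq cl by blast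
qed


lemma part2:
  assumes GP: "graded_vs sP GP" and sq: "is_subquotient sA GA sP GP m l sQ GQ mQ pi"
  shows "concentrated GQ l"
  unfolding concentrated_def
proof (intro allI impI)
  fix k assume kl: "k \<noteq> l"
  have msP: "module sP" by (rule gv_module[OF GP])
  have ker: "\<And>x. x \<in> degfilt sP GP l \<Longrightarrow> pi x = 0 \<longleftrightarrow> x \<in> degfilt sP GP (l - 1)"
    and img: "pi ` (GP k \<inter> degfilt sP GP l) = GQ k" using sq unfolding is_subquotient_def by blast+
  have z: "0 \<in> GP k \<inter> degfilt sP GP l"
    using gv_0[OF GP] module.subspace_0[OF msP df_sub[OF GP]] by auto
  have pi0: "pi 0 = 0" using ker[of 0] z module.subspace_0[OF msP df_sub[OF GP]] by auto
  have "pi ` (GP k \<inter> degfilt sP GP l) = {0}"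
  proof (cases "k < l")
    case True
    have "\<forall>x\<in>GP k \<inter> degfilt sP GP l. pi x = 0"
      using ker df_in[OF GP, of k "l - 1"] True by auto
    then show ?thesis using z by force
  next
    case False
    then have "k > l" using kl by auto
    then have "GP k \<inter> degfilt sP GP l = {0}" using graded_high_zero[OF GP] z by blast
    then show ?thesis using pi0 by simp
  qed
  then show "GQ k = {0}" using img by simp
qed


lemma conc_carrier:
  assumes G: "graded_vs s G" and c: "concentrated G l"
  shows "gcarrier s G = G l"
proof -
  have ms: "module s" by (rule gv_module[OF G])
  have "(\<Union>k. G k) = G l" using c gv_0[OF G, of l] unfolding concentrated_def by auto
  then show ?thesis unfolding gcarrier_def using module.span_eq_iff[OF ms] gv_sub[OF G] by simp
qed

lemma part3:
  fixes mu :: "'a::ab_group_add list \<Rightarrow> 'a"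
  assumes Q: "ainf_mod sA GA mu sQ GQ mQ" and cQ: "concentrated GQ l"
    and R: "ainf_mod sA GA mu sR GR mR" and Rmin: "minimal_mod sR GR mR" and cR: "concentrated GR l"
    and phil: "lin_on sQ (GQ l) sR phi" and bij: "bij_betw phi (GQ l) (GR l)"
    and hyp: "\<forall>q\<in>GQ l. \<forall>a\<in>GA 0. phi (mQ q [a]) = mR (phi q) [a]"
    and Anonpos: "\<forall>k>0. GA k = {0}"
  shows "ainf_equivalent sA GA mu sQ GQ mQ sR GR mR"
proof -
  have GA: "graded_vs sA GA" and GQ: "graded_vs sQ GQ" and GR: "graded_vs sR GR"
    using mf_GA[OF Q] mf_GP[OF Q] mf_GP[OF R] .
  have msQ: "module sQ" and msR: "module sR" using gv_module[OF GQ] gv_module[OF GR] .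
  have carQ: "gcarrier sQ GQ = GQ l" by (rule conc_carrier[OF GQ cQ])
  have phi0: "phi 0 = 0" by (rule lin_zero[OF phil gv_0[OF GQ]])
  have zQ: "\<And>p k. p \<in> GQ k \<Longrightarrow> k \<noteq> l \<Longrightarrow> p = 0" using cQ unfolding concentrated_def by auto
  have zR: "\<And>p k. p \<in> GR k \<Longrightarrow> k \<noteq> l \<Longrightarrow> p = 0" using cR unfolding concentrated_def by auto
  have mQ0: "\<And>as. set as \<subseteq> gcarrier sA GA \<Longrightarrow> mQ 0 as = 0"
    using lin_zero[OF mf_lin[OF Q] module.subspace_0[OF msQ gv_csub[OF GQ]]] .
  have mR0: "\<And>as. set as \<subseteq> gcarrier sA GA \<Longrightarrow> mR 0 as = 0"
    using lin_zero[OF mf_lin[OF R] module.subspace_0[OF msR gv_csub[OF GR]]] .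
  have mRe: "\<And>q k. q \<in> GR k \<Longrightarrow> mR q [] = 0" using Rmin gv_in[OF GR] unfolding minimal_mod_def by blast
  have phiR: "\<And>p. p \<in> GQ l \<Longrightarrow> phi p \<in> GR l" using bij unfolding bij_betw_def by auto
  have E: "mR (phi p) as = phi (mQ p as)" if p: "p \<in> GQ k" and h: "hom_list GA ks as" for p k ks as
  proof -
    have asC: "set as \<subseteq> gcarrier sA GA" by (rule hom_list_set[OF h gv_in[OF GA]])
    show ?thesis
    proof (cases "k = l")
      case False
      then have "p = 0" using zQ p by blast
      then show ?thesis using mQ0[OF asC] mR0[OF asC] phi0 by simp
    next
      case True
      have h': "hom_list GA (map (min 0) ks) as" by (rule hom_list_min[OF h Anonpos gv_0[OF GA]])
      let ?d = "l + sum_list (map (min 0) ks) + 1 - int (length as)"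
      have dQ: "mQ p as \<in> GQ ?d" using mf_deg[OF Q _ h'] p True by blast
      have dR: "mR (phi p) as \<in> GR ?d" using mf_deg[OF R phiR h'] p True by blast
      show ?thesis
      proof (cases "?d = l")
        case False
        then show ?thesis using zQ[OF dQ] zR[OF dR] phi0 by simp
      next
        case True
        have len: "length (map (min 0) ks) = length as" using h' unfolding hom_list_def by simp
        have "sum_list (map (min (0::int)) ks) \<le> 0" by (rule sum_min_nonpos)
        moreover have n: "int (length as) = sum_list (map (min (0::int)) ks) + 1" using True by linarith
        ultimately have n1: "length as \<le> 1" by linarith
        have "as \<noteq> []"
        proof
          assume "as = []"
          then have "map (min 0) ks = []" using len by simp
          then show False using n \<open>as = []\<close> by simp
        qed
        then obtain a where as: "as = [a]" using n1 by (cases as) auto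
        have s0: "sum_list (map (min (0::int)) ks) = 0" using n as by simp
        obtain k0 where ks: "map (min 0) ks = [k0]" using len as by (cases "map (min 0) ks") auto
        have "a \<in> GA k0" using h' as ks unfolding hom_list_def by auto
        moreover have "k0 = 0" using s0 ks by simp
        ultimately show ?thesis using hyp p \<open>k = l\<close> as by auto
      qed
    qed
  qed
  define f where "f = (\<lambda>q (xs::'a list). if xs = [] then phi q else 0)"
  have morph: "ainf_morph sA GA mu sQ GQ mQ sR GR mR f"
    unfolding ainf_morph_def
  proof (intro conjI allI impI ballI)
    fix as assume "set as \<subseteq> gcarrier sA GA"
    show "lin_on sQ (gcarrier sQ GQ) sR (\<lambda>p. f p as)"
      using phil carQ module.scale_zero_right[OF msR] unfolding f_def lin_on_def by auto
  next
    fix p assume "p \<in> gcarrier sQ GQ"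
    show "multilin sA (gcarrier sA GA) sR (f p)"
      using module.scale_zero_right[OF msR] unfolding f_def multilin_def lin_on_def by auto
  next
    fix k p ks as assume p: "p \<in> GQ k" and h: "hom_list GA ks as"
    show "f p as \<in> GR (k + sum_list ks - int (length as))"
    proof (cases "as = []")
      case True
      have "length ks = 0" using h True unfolding hom_list_def by simp
      then have ks: "ks = []" by simp
      show ?thesis
      proof (cases "k = l")
        case True then show ?thesis using phiR p ks \<open>as = []\<close> by (simp add: f_def)
      next
        case False then show ?thesis using zQ[OF p] phi0 gv_0[OF GR] ks \<open>as = []\<close> by (simp add: f_def)
      qed
    next
      case False then show ?thesis using gv_0[OF GR] by (simp add: f_def)
    qed
  next
    fix k p ks as assume p: "p \<in> GQ k" and h: "hom_list GA ks as"
    have asC: "set as \<subseteq> gcarrier sA GA" by (rule hom_list_set[OF h gv_in[OF GA]])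
    have L: "(\<Sum>i\<le>length as. mR (f p (take i as)) (drop i as)) = mR (phi p) as"
    proof -
      have z: "mR (f p (take i as)) (drop i as) = 0" if i: "i \<in> {..length as} - {0}" for i
      proof -
        have dC: "set (drop i as) \<subseteq> gcarrier sA GA" by (rule order_trans[OF set_drop_subset asC])
        have "take i as \<noteq> []" using i by auto
        then have "f p (take i as) = 0" by (simp add: f_def)
        then show ?thesis using mR0[OF dC] by simp
      qed
      have "(\<Sum>i\<le>length as. mR (f p (take i as)) (drop i as)) = mR (f p (take 0 as)) (drop 0 as)"
      proof -
        have "(\<Sum>i\<le>length as. mR (f p (take i as)) (drop i as)) = mR (f p (take 0 as)) (drop 0 as) +
           (\<Sum>i\<in>{..length as} - {0}. mR (f p (take i as)) (drop i as))"
          by (rule sum.remove) auto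
        moreover have "(\<Sum>i\<in>{..length as} - {0}. mR (f p (take i as)) (drop i as)) = 0"
          by (rule sum.neutral) (use z in blast)
        ultimately show ?thesis by simp
      qed
      then show ?thesis by (simp add: f_def)
    qed
    have R1: "(\<Sum>i\<le>length as. f (mQ p (take i as)) (drop i as)) = phi (mQ p as)"
    proof -
      have "(\<Sum>i\<le>length as. f (mQ p (take i as)) (drop i as)) =
            (\<Sum>i\<le>length as. if i = length as then phi (mQ p as) else 0)"
        by (rule sum.cong) (auto simp: f_def)
      then show ?thesis by simp
    qed
    have R2: "(\<Sum>(i, j)\<in>splits (length as).
           sR (ksign ((k - 1) + shsum (take i ks))) (f p (take i as @ mu (take j (drop i as)) # drop (i + j) as))) = 0"
      by (rule sum.neutral) (auto simp: f_def module.scale_zero_right[OF msR])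
    show "(\<Sum>i\<le>length as. mR (f p (take i as)) (drop i as)) =
        (\<Sum>i\<le>length as. f (mQ p (take i as)) (drop i as)) +
        (\<Sum>(i, j)\<in>splits (length as).
           sR (ksign ((k - 1) + shsum (take i ks))) (f p (take i as @ mu (take j (drop i as)) # drop (i + j) as)))"
      unfolding L R1 R2 using E[OF p h] by simp
  qed
  have qi: "quasi_iso GQ mQ GR mR f"
    unfolding quasi_iso_def
  proof (intro conjI allI ballI impI)
    fix k p assume p: "p \<in> GQ k" and "mQ p [] = 0" and ex: "\<exists>q\<in>GR (k - 1). f p [] = mR q []"
    then have "phi p = 0" using mRe by (auto simp: f_def)
    then have "p = 0"
    proof (cases "k = l")
      case True
      then show ?thesis using bij p \<open>phi p = 0\<close> phi0 gv_0[OF GQ] unfolding bij_betw_def inj_on_def by metis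
    qed (use zQ p in blast)
    then show "\<exists>p'\<in>GQ (k - 1). p = mQ p' []" using gv_0[OF GQ] mQ0[of "[]"] by auto
  next
    fix k q assume q: "q \<in> GR k" and "mR q [] = 0"
    show "\<exists>p\<in>GQ k. mQ p [] = 0 \<and> (\<exists>q'\<in>GR (k - 1). q = f p [] + mR q' [])"
    proof (cases "k = l")
      case True
      then obtain p where p: "p \<in> GQ l" "q = phi p" using bij q unfolding bij_betw_def by auto
      have "mQ p [] \<in> GQ (l + 1)" using mf_deg[OF Q p(1), of "[]" "[]"] by (simp add: hom_list_def)
      then have "mQ p [] = 0" using zQ by fastforce
      then show ?thesis using p True gv_0[OF GR] mRe by (intro bexI[of _ p]) (auto simp: f_def)
    next
      case False
      then have "q = 0" using zR q by blast
      then show ?thesis using gv_0[OF GQ] gv_0[OF GR] mQ0[of "[]"] mRe phi0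
        by (intro bexI[of _ 0]) (auto simp: f_def)
    qed
  qed
  show ?thesis unfolding ainf_equivalent_def using morph qi by blast
qed

theorem lemma4p5:
  fixes sA :: "'k::field \<Rightarrow> 'a::ab_group_add \<Rightarrow> 'a" and GA :: "int \<Rightarrow> 'a set" and mu :: "'a list \<Rightarrow> 'a"
    and sP :: "'k \<Rightarrow> 'p::ab_group_add \<Rightarrow> 'p" and GP :: "int \<Rightarrow> 'p set" and m :: "'p \<Rightarrow> 'a list \<Rightarrow> 'p"
  assumes A: "ainf_alg sA GA mu" and Amin: "minimal_alg sA GA mu"
    and Anonpos: "\<forall>k>0. GA k = {0}"
    and P: "ainf_mod sA GA mu sP GP m" and Pmin: "minimal_mod sP GP m"
  shows "\<forall>l. ainf_submod sA GA sP GP m (degfilt sP GP l) \<and>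
    (\<forall>(sQ :: 'k \<Rightarrow> 'q::ab_group_add \<Rightarrow> 'q) GQ mQ pi.
       ainf_mod sA GA mu sQ GQ mQ \<and> is_subquotient sA GA sP GP m l sQ GQ mQ pi \<longrightarrow>
       concentrated GQ l \<and>
       (\<forall>(sR :: 'k \<Rightarrow> 'r::ab_group_add \<Rightarrow> 'r) GR mR phi.
          ainf_mod sA GA mu sR GR mR \<and> minimal_mod sR GR mR \<and> concentrated GR l \<and>
          lin_on sQ (GQ l) sR phi \<and> bij_betw phi (GQ l) (GR l) \<and>
          (\<forall>q\<in>GQ l. \<forall>a\<in>GA 0. phi (mQ q [a]) = mR (phi q) [a]) \<longrightarrow>
          ainf_equivalent sA GA mu sQ GQ mQ sR GR mR))"
proof (intro allI conjI impI)
  fix l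
  show "ainf_submod sA GA sP GP m (degfilt sP GP l)" by (rule part1[OF P Pmin Anonpos])
next
  fix l and sQ :: "'k \<Rightarrow> 'q::ab_group_add \<Rightarrow> 'q" and GQ mQ pi
  assume h: "ainf_mod sA GA mu sQ GQ mQ \<and> is_subquotient sA GA sP GP m l sQ GQ mQ pi"
  then show cQ: "concentrated GQ l" using part2[OF mf_GP[OF P]] by blast
  fix sR :: "'k \<Rightarrow> 'r::ab_group_add \<Rightarrow> 'r" and GR mR phi
  assume h2: "ainf_mod sA GA mu sR GR mR \<and> minimal_mod sR GR mR \<and> concentrated GR l \<and>
          lin_on sQ (GQ l) sR phi \<and> bij_betw phi (GQ l) (GR l) \<and>
          (\<forall>q\<in>GQ l. \<forall>a\<in>GA 0. phi (mQ q [a]) = mR (phi q) [a])"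
  show "ainf_equivalent sA GA mu sQ GQ mQ sR GR mR"
    using part3[of sA GA mu sQ GQ mQ l sR GR mR phi] h h2 cQ Anonpos by blast
qed

end
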